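(* Let $T$ be an interval and let $u:T\to\mathcal V_{[0,1]}$ with $u\in H^1_{loc}(T;\mathcal V)$. Then there exists $\beta:T\to\mathcal V$ such that $(u,\beta)$ is a solution to mass-conserving double-obstacle AC flow on $T$ if and only if for a.e. $t\in T$ and all $\eta\in\mathcal V_{[0,1]}$ with $\mathcal{M}(\eta) = \mathcal{M}(u(t))$ the following hold: \[ \left\langle\varepsilon\frac{du}{dt}-u(t),\eta-u(t)\right\rangle_{\mathcal V}+\varepsilon\left\langle\nabla u(t),\nabla\eta-\nabla u(t)\right\rangle_\mathcal{E}\ge0, \qquad \left\langle\frac{du}{dt},\mathbf{1} \right\rangle_{\mathcal V} = 0. \]
   Context: $G=(V,E)$ is a finite, simple, connected, undirected graph with weights $\omega_{ij}=\omega_{ji}>0$ for $ij\in E$, $\omega_{ij}=0$ otherwise; $d_i=\sum_j\omega_{ij}$, $r\in[0,1]$ fixed. $\mathcal V$ = functions $V\to\mathbb R$ with $\langle u,v\rangle_{\mathcal V}=\sum_i u_iv_id_i^r$; $\mathcal V_X$ = functions $V\to X$. $\mathcal E$ = functions on $E$ with $\langle\varphi,\phi\rangle_{\mathcal E}=\frac12\sum_{i,j}\varphi_{ij}\phi_{ij}\omega_{ij}$; $(\nabla u)_{ij}=u_j-u_i$ if $ij\in E$, $0$ otherwise. $(\Delta u)_i=d_i^{-r}\sum_j\omega_{ij}(u_i-u_j)$. $\mathbf 1$ all-ones; $\mathcal M(u)=\langle u,\mathbf 1\rangle_{\mathcal V}$; $\bar v=\mathcal M(v)/\mathcal M(\mathbf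 1)$. $\varepsilon>0$. For $u\in\mathcal V_{[0,1]}$, $\mathcal B(u)$ = set of $\beta\in\mathcal V$ with $\beta_i\ge0$ if $u_i=0$, $\beta_i=0$ if $0<u_i<1$, $\beta_i\le0$ if $u_i=1$; $\mathcal B(u)=\emptyset$ otherwise. $H^1_{loc}(T;\mathcal V)$: functions $T\to\mathcal V$ whose components lie in $H^1((a,b))$ for all $a,b\in T$, with weak derivative $du/dt$. A pair $(u,\beta)$ with $u:T\to\mathcal V_{[0,1]}$, $\beta:T\to\mathcal V$ is a solution to mass-conserving double-obstacle AC flow on $T$ if $u\in H^1_{loc}(T;\mathcal V)\cap C^0(T;\mathcal V)$ and for a.e. $t\in T$: $\varepsilon \frac{du}{dt} + \varepsilon\Delta u(t)-u(t)+\overline{u(t)}\mathbf{1} = \beta(t) - \overline{\beta(t)}\mathbf{1}$ and $\beta(t)\in\mathcal B(u(t))$.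
   Formalization: The function u is also taken to be continuous on T, so u lies in $C^0(T;\mathcal V)$ as well as in $H^1_{loc}(T;\mathcal V)$. The statement above fails without it. *)

theory Defs
  imports "HOL-Analysis.Analysis"
begin

definition weighted_graph :: "('v::finite \<Rightarrow> 'v \<Rightarrow> real) \<Rightarrow> bool" where
  "weighted_graph w \<longleftrightarrow>
     (\<forall>i j. w i j = w j i) \<and> (\<forall>i j. 0 \<le> w i j) \<and> (\<forall>i. w i i = 0) \<and>
     (\<forall>i j. (i, j) \<in> {(a, b). 0 < w a b}\<^sup>*)"

definition deg :: "('v::finite \<Rightarrow> 'v \<Rightarrow> real) \<Rightarrow> 'v \<Rightarrow> real" where
  "deg w i = (\<Sum>j\<in>UNIV. w i j)"

definition ipV :: "('v::finite \<Rightarrow> 'v \<Rightarrow> real) \<Rightarrow> real \<Rightarrow> ('v \<Rightarrow> real) \<Rightarrow> ('v \<Rightarrow> real) \<Rightarrow> real" where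
  "ipV w r u v = (\<Sum>i\<in>UNIV. u i * v i * deg w i powr r)"

definition ipE :: "('v::finite \<Rightarrow> 'v \<Rightarrow> real) \<Rightarrow> ('v \<Rightarrow> 'v \<Rightarrow> real) \<Rightarrow> ('v \<Rightarrow> 'v \<Rightarrow> real) \<Rightarrow> real" where
  "ipE w \<phi> \<psi> = 1/2 * (\<Sum>i\<in>UNIV. \<Sum>j\<in>UNIV. \<phi> i j * \<psi> i j * w i j)"

definition grad :: "('v::finite \<Rightarrow> 'v \<Rightarrow> real) \<Rightarrow> ('v \<Rightarrow> real) \<Rightarrow> 'v \<Rightarrow> 'v \<Rightarrow> real" where
  "grad w u i j = (if 0 < w i j then u j - u i else 0)"

definition lap :: "('v::finite \<Rightarrow> 'v \<Rightarrow> real) \<Rightarrow> real \<Rightarrow> ('v \<Rightarrow> real) \<Rightarrow> 'v \<Rightarrow> real" where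
  "lap w r u i = deg w i powr (- r) * (\<Sum>j\<in>UNIV. w i j * (u i - u j))"

definition mass :: "('v::finite \<Rightarrow> 'v \<Rightarrow> real) \<Rightarrow> real \<Rightarrow> ('v \<Rightarrow> real) \<Rightarrow> real" where
  "mass w r u = ipV w r u (\<lambda>_. 1)"

definition avg :: "('v::finite \<Rightarrow> 'v \<Rightarrow> real) \<Rightarrow> real \<Rightarrow> ('v \<Rightarrow> real) \<Rightarrow> real" where
  "avg w r u = mass w r u / mass w r (\<lambda>_. 1)"

definition Vbox :: "('v \<Rightarrow> real) set" where
  "Vbox = {u. \<forall>i. 0 \<le> u i \<and> u i \<le> 1}"

definition Bset :: "('v \<Rightarrow> real) \<Rightarrow> ('v \<Rightarrow> real) set" where
  "Bset u = (if u \<in> Vbox then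
      {\<beta>. \<forall>i. (u i = 0 \<longrightarrow> 0 \<le> \<beta> i) \<and> (0 < u i \<and> u i < 1 \<longrightarrow> \<beta> i = 0) \<and> (u i = 1 \<longrightarrow> \<beta> i \<le> 0)}
    else {})"

definition smooth_fun :: "(real \<Rightarrow> real) \<Rightarrow> (nat \<Rightarrow> real \<Rightarrow> real) \<Rightarrow> bool" where
  "smooth_fun \<phi> D \<longleftrightarrow> D 0 = \<phi> \<and> (\<forall>k x. (D k has_real_derivative D (Suc k) x) (at x))"

definition test_fun :: "real \<Rightarrow> real \<Rightarrow> (real \<Rightarrow> real) \<Rightarrow> (nat \<Rightarrow> real \<Rightarrow> real) \<Rightarrow> bool" where
  "test_fun a b \<phi> D \<longleftrightarrow> smooth_fun \<phi> D \<and>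
     (\<exists>c d. a < c \<and> d < b \<and> (\<forall>x. x \<notin> {c..d} \<longrightarrow> \<phi> x = 0))"

definition L2_on :: "real set \<Rightarrow> (real \<Rightarrow> real) \<Rightarrow> bool" where
  "L2_on S f \<longleftrightarrow> set_borel_measurable lebesgue S f \<and> set_integrable lebesgue S (\<lambda>t. (f t)\<^sup>2)"

definition H1_weak_deriv :: "real \<Rightarrow> real \<Rightarrow> (real \<Rightarrow> real) \<Rightarrow> (real \<Rightarrow> real) \<Rightarrow> bool" where
  "H1_weak_deriv a b f g \<longleftrightarrow> L2_on {a<..<b} f \<and> L2_on {a<..<b} g \<and>
     (\<forall>\<phi> D. test_fun a b \<phi> D \<longrightarrow>
        (\<integral>t\<in>{a<..<b}. f t * D 1 t \<partial>lebesgue) = - (\<integral>t\<in>{a<..<b}. g t * \<phi> t \<partial>lebesgue))"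

definition H1loc_deriv :: "real set \<Rightarrow> (real \<Rightarrow> 'v \<Rightarrow> real) \<Rightarrow> (real \<Rightarrow> 'v \<Rightarrow> real) \<Rightarrow> bool" where
  "H1loc_deriv T u u' \<longleftrightarrow>
     (\<forall>a\<in>T. \<forall>b\<in>T. a < b \<longrightarrow> (\<forall>i. H1_weak_deriv a b (\<lambda>t. u t i) (\<lambda>t. u' t i)))"

definition mc_dobs_AC_solution ::
  "('v::finite \<Rightarrow> 'v \<Rightarrow> real) \<Rightarrow> real \<Rightarrow> real \<Rightarrow> real set \<Rightarrow> (real \<Rightarrow> 'v \<Rightarrow> real) \<Rightarrow> (real \<Rightarrow> 'v \<Rightarrow> real) \<Rightarrow> bool" where
  "mc_dobs_AC_solution w r \<epsilon> T u \<beta> \<longleftrightarrow>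
     (\<forall>t\<in>T. u t \<in> Vbox) \<and> continuous_on T u \<and>
     (\<exists>u'. H1loc_deriv T u u' \<and>
        (AE t in lebesgue. t \<in> T \<longrightarrow>
           (\<forall>i. \<epsilon> * u' t i + \<epsilon> * lap w r (u t) i - u t i + avg w r (u t)
                 = \<beta> t i - avg w r (\<beta> t)) \<and>
           \<beta> t \<in> Bset (u t)))"

end

theory Submission
  imports Defs
begin


definition hq :: "nat \<Rightarrow> real \<Rightarrow> real" where
  "hq n x = (if 0 < x then exp (- inverse x) * inverse x ^ n else 0)"

lemma hq_deriv_pos:
  assumes x: "0 < x"
  shows "(hq n has_real_derivative (hq (n+2) x - real n * hq (n+1) x)) (at x)"
proof -
  have d: "((\<lambda>y. exp (- inverse y) * inverse y ^ n) has_real_derivative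
      (exp (- inverse x) * (inverse x ^ 2) * inverse x ^ n
       + exp (- inverse x) * (real n * inverse x ^ (n - 1) * (- (inverse x ^ 2))))) (at x)"
    using x by (auto intro!: derivative_eq_intros simp: power2_eq_square)
  have e: "exp (- inverse x) * (inverse x ^ 2) * inverse x ^ n
       + exp (- inverse x) * (real n * inverse x ^ (n - 1) * (- (inverse x ^ 2)))
     = hq (n+2) x - real n * hq (n+1) x"
  proof (cases n)
    case 0 then show ?thesis using x by (simp add: hq_def power2_eq_square)
  next
    case (Suc k) then show ?thesis using x by (simp add: hq_def power2_eq_square algebra_simps)
  qed
  show ?thesis
    apply (rule has_field_derivative_transform_within_open[where S="{0<..}" and f="\<lambda>y. exp (- inverse y) * inverse y ^ n"])
    using d e x by (auto simp: hq_def)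
qed

lemma hq_deriv_neg:
  assumes x: "x < 0"
  shows "(hq n has_real_derivative (hq (n+2) x - real n * hq (n+1) x)) (at x)"
proof -
  have "(hq n has_real_derivative 0) (at x)"
    by (rule has_field_derivative_transform_within_open[of "\<lambda>y. 0" 0 x "{..<0}"]) (use x in \<open>auto simp: hq_def\<close>)
  then show ?thesis using x by (simp add: hq_def)
qed

lemma hq_deriv_zero:
  "(hq n has_real_derivative (hq (n+2) 0 - real n * hq (n+1) 0)) (at 0)"
proof -
  have R: "((\<lambda>y. (hq n y - hq n 0) / (y - 0)) \<longlongrightarrow> 0) (at_right 0)"
  proof -
    have lim: "((\<lambda>y. inverse y ^ Suc n / exp (inverse y)) \<longlongrightarrow> 0) (at_right (0::real))"
      by (rule filterlim_compose[OF tendsto_power_div_exp_0 filterlim_inverse_at_top_right])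
    have "eventually (\<lambda>y. inverse y ^ Suc n / exp (inverse y) = (hq n y - hq n 0) / (y - 0)) (at_right (0::real))"
      using eventually_at_right_less[of "0::real"]
      by eventually_elim (auto simp: hq_def exp_minus field_simps)
    then show ?thesis by (rule Lim_transform_eventually[OF lim])
  qed
  have L: "((\<lambda>y. (hq n y - hq n 0) / (y - 0)) \<longlongrightarrow> 0) (at_left 0)"
  proof -
    have "eventually (\<lambda>y. 0 = (hq n y - hq n 0) / (y - 0)) (at_left (0::real))"
      using eventually_at_left_real[of "-1" "0::real", simplified]
      by eventually_elim (auto simp: hq_def)
    then show ?thesis by (rule Lim_transform_eventually[OF tendsto_const])
  qed
  have "((\<lambda>y. (hq n y - hq n 0) / (y - 0)) \<longlongrightarrow> 0) (at 0)"
    using L R by (simp add: filterlim_at_split)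
  then show ?thesis by (simp add: has_field_derivative_iff hq_def)
qed

lemma hq_deriv: "(hq n has_real_derivative (hq (n+2) x - real n * hq (n+1) x)) (at x)"
  using hq_deriv_pos hq_deriv_neg hq_deriv_zero by (cases "x < 0"; cases "x = 0") auto

inductive_set alg :: "(real \<Rightarrow> real) set \<Rightarrow> (real \<Rightarrow> real) set" for F where
  base: "f \<in> F \<Longrightarrow> f \<in> alg F"
| const: "(\<lambda>x. c) \<in> alg F"
| add: "f \<in> alg F \<Longrightarrow> g \<in> alg F \<Longrightarrow> (\<lambda>x. f x + g x) \<in> alg F"
| mult: "f \<in> alg F \<Longrightarrow> g \<in> alg F \<Longrightarrow> (\<lambda>x. f x * g x) \<in> alg F"

lemma alg_deriv:
  assumes F: "\<And>f. f \<in> F \<Longrightarrow> \<exists>f'\<in>alg F. \<forall>x. (f has_real_derivative f' x) (at x)"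
  shows "f \<in> alg F \<Longrightarrow> \<exists>f'\<in>alg F. \<forall>x. (f has_real_derivative f' x) (at x)"
proof (induction rule: alg.induct)
  case (base f) then show ?case using F by blast
next
  case (const c) then show ?case by (intro bexI[of _ "\<lambda>x. 0"]) (auto intro: alg.const)
next
  case (add f g)
  then obtain f' g' where "f' \<in> alg F" "g' \<in> alg F" "\<forall>x. (f has_real_derivative f' x) (at x)"
     "\<forall>x. (g has_real_derivative g' x) (at x)" by blast
  then show ?case by (intro bexI[of _ "\<lambda>x. f' x + g' x"]) (auto intro: alg.add derivative_eq_intros)
next
  case (mult f g)
  then obtain f' g' where "f' \<in> alg F" "g' \<in> alg F" "\<forall>x. (f has_real_derivative f' x) (at x)"
     "\<forall>x. (g has_real_derivative g' x) (at x)" by blast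
  then have "\<forall>x. ((\<lambda>x. f x * g x) has_real_derivative f' x * g x + g' x * f x) (at x)"
    using DERIV_mult by blast
  moreover have "(\<lambda>x. f' x * g x + g' x * f x) \<in> alg F"
    using \<open>f' \<in> alg F\<close> \<open>g' \<in> alg F\<close> mult.hyps by (intro alg.add alg.mult)
  ultimately show ?case by (intro bexI[of _ "\<lambda>x. f' x * g x + g' x * f x"]) auto
qed

lemma alg_smooth:
  assumes F: "\<And>f. f \<in> F \<Longrightarrow> \<exists>f'\<in>alg F. \<forall>x. (f has_real_derivative f' x) (at x)"
    and f: "f \<in> alg F"
  shows "\<exists>D. smooth_fun f D"
proof -
  define nxt where "nxt g = (SOME g'. g' \<in> alg F \<and> (\<forall>x. (g has_real_derivative g' x) (at x)))" for g
  have nxt: "nxt g \<in> alg F \<and> (\<forall>x. (g has_real_derivative nxt g x) (at x))" if "g \<in> alg F" for g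
    unfolding nxt_def
    by (rule someI_ex[of "\<lambda>g'. g' \<in> alg F \<and> (\<forall>x. (g has_real_derivative g' x) (at x))"])
       (use alg_deriv[OF F that] in blast)
  define D where "D k = (nxt ^^ k) f" for k
  have DA: "D k \<in> alg F" for k by (induction k) (auto simp: D_def f nxt)
  have "smooth_fun f D" unfolding smooth_fun_def
  proof
    show "D 0 = f" by (simp add: D_def)
    show "\<forall>k x. (D k has_real_derivative D (Suc k) x) (at x)"
      using nxt[OF DA] by (simp add: D_def)
  qed
  then show ?thesis by blast
qed

lemma hq_nonneg: "0 \<le> hq n y" by (simp add: hq_def)

lemma hq_den_pos: "0 < hq 0 y + hq 0 (1 - y)"
proof (cases "0 < y")
  case True
  then have "hq 0 y > 0" by (simp add: hq_def)
  then show ?thesis using hq_nonneg[of 0 "1-y"] by linarith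
next
  case False then show ?thesis using hq_nonneg[of 0 y] by (simp add: hq_def)
qed

definition Qf :: "nat \<Rightarrow> real \<Rightarrow> real \<Rightarrow> real \<Rightarrow> real" where
  "Qf n \<alpha> \<beta> = (\<lambda>x. hq n (\<alpha> * x + \<beta>))"
definition Rf :: "real \<Rightarrow> real \<Rightarrow> real \<Rightarrow> real" where
  "Rf \<alpha> \<beta> = (\<lambda>x. inverse (hq 0 (\<alpha> * x + \<beta>) + hq 0 (1 - (\<alpha> * x + \<beta>))))"
definition FF :: "(real \<Rightarrow> real) set" where
  "FF = range (\<lambda>(n, \<alpha>, \<beta>). Qf n \<alpha> \<beta>) \<union> range (\<lambda>(\<alpha>, \<beta>). Rf \<alpha> \<beta>)"

lemma Qf_alg: "Qf n \<alpha> \<beta> \<in> alg FF"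
  by (rule alg.base) (unfold FF_def, intro UnI1 image_eqI[where x="(n,\<alpha>,\<beta>)"], auto)
lemma Rf_alg: "Rf \<alpha> \<beta> \<in> alg FF"
  by (rule alg.base) (unfold FF_def, intro UnI2 image_eqI[where x="(\<alpha>,\<beta>)"], auto)

lemma Qf_deriv: "(Qf n \<alpha> \<beta> has_real_derivative ((hq (n+2) (\<alpha> * x + \<beta>) - real n * hq (n+1) (\<alpha> * x + \<beta>)) * \<alpha>)) (at x)"
  unfolding Qf_def
  by (rule DERIV_chain2[OF hq_deriv]) (auto intro!: derivative_eq_intros)

lemma FF_deriv: "f \<in> FF \<Longrightarrow> \<exists>f'\<in>alg FF. \<forall>x. (f has_real_derivative f' x) (at x)"
proof -
  assume "f \<in> FF"
  then consider n \<alpha> \<beta> where "f = Qf n \<alpha> \<beta>" | \<alpha> \<beta> where "f = Rf \<alpha> \<beta>"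
    unfolding FF_def by auto
  then show ?thesis
  proof cases
    case (1 n \<alpha> \<beta>)
    let ?g = "\<lambda>x. (Qf (n+2) \<alpha> \<beta> x + (\<lambda>x. - real n) x * Qf (n+1) \<alpha> \<beta> x) * (\<lambda>x. \<alpha>) x"
    have "?g \<in> alg FF" by (intro alg.mult alg.add alg.const Qf_alg)
    moreover have "\<forall>x. (f has_real_derivative ?g x) (at x)"
      using Qf_deriv[of n \<alpha> \<beta>] unfolding 1 by (simp add: Qf_def)
    ultimately show ?thesis by (intro bexI[of _ ?g]) auto
  next
    case (2 \<alpha> \<beta>)
    let ?g = "\<lambda>x. (\<lambda>x. -1) x * ((Qf 2 \<alpha> \<beta> x * (\<lambda>x. \<alpha>) x + Qf 2 (-\<alpha>) (1 - \<beta>) x * (\<lambda>x. - \<alpha>) x) * (Rf \<alpha> \<beta> x * Rf \<alpha> \<beta> x))"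
    have "?g \<in> alg FF" by (intro alg.mult alg.add alg.const Qf_alg Rf_alg)
    moreover have "(f has_real_derivative ?g x) (at x)" for x
    proof -
      have d1: "((\<lambda>x. hq 0 (\<alpha> * x + \<beta>)) has_real_derivative Qf 2 \<alpha> \<beta> x * \<alpha>) (at x)"
        using Qf_deriv[of 0 \<alpha> \<beta> x] by (simp add: Qf_def eval_nat_numeral)
      have d2: "((\<lambda>x. hq 0 (1 - (\<alpha> * x + \<beta>))) has_real_derivative Qf 2 (-\<alpha>) (1 - \<beta>) x * (- \<alpha>)) (at x)"
        using Qf_deriv[of 0 "-\<alpha>" "1 - \<beta>" x] by (simp add: Qf_def algebra_simps eval_nat_numeral)
      have d: "((\<lambda>x. hq 0 (\<alpha> * x + \<beta>) + hq 0 (1 - (\<alpha> * x + \<beta>))) has_real_derivative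
           Qf 2 \<alpha> \<beta> x * \<alpha> + Qf 2 (-\<alpha>) (1 - \<beta>) x * (- \<alpha>)) (at x)"
        by (rule DERIV_add[OF d1 d2])
      have "(f has_real_derivative - ((Qf 2 \<alpha> \<beta> x * \<alpha> + Qf 2 (-\<alpha>) (1 - \<beta>) x * (- \<alpha>)) *
           inverse ((hq 0 (\<alpha> * x + \<beta>) + hq 0 (1 - (\<alpha> * x + \<beta>))) ^ Suc (Suc 0)))) (at x)"
        unfolding 2 Rf_def
        by (rule DERIV_inverse_fun[OF d]) (use hq_den_pos in \<open>simp add: less_imp_neq[symmetric]\<close>)
      moreover have "- ((Qf 2 \<alpha> \<beta> x * \<alpha> + Qf 2 (-\<alpha>) (1 - \<beta>) x * (- \<alpha>)) *
           inverse ((hq 0 (\<alpha> * x + \<beta>) + hq 0 (1 - (\<alpha> * x + \<beta>))) ^ Suc (Suc 0))) = ?g x"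
        by (simp add: Rf_def power2_eq_square)
      ultimately show ?thesis by (simp only:)
    qed
    ultimately show ?thesis by (intro bexI[of _ ?g]) auto
  qed
qed

lemma FF_smooth: "f \<in> alg FF \<Longrightarrow> \<exists>D. smooth_fun f D"
  by (rule alg_smooth[OF FF_deriv])

definition Sstep :: "real \<Rightarrow> real" where
  "Sstep y = hq 0 y * inverse (hq 0 y + hq 0 (1 - y))"

lemma Sstep_le0: "y \<le> 0 \<Longrightarrow> Sstep y = 0" by (simp add: Sstep_def hq_def)
lemma Sstep_ge1: "1 \<le> y \<Longrightarrow> Sstep y = 1" by (simp add: Sstep_def hq_def)
lemma Sstep_bounds: "0 \<le> Sstep y \<and> Sstep y \<le> 1"
proof -
  have p: "0 < hq 0 y + hq 0 (1 - y)" by (rule hq_den_pos)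
  have "hq 0 y \<le> hq 0 y + hq 0 (1 - y)" using hq_nonneg[of 0 "1 - y"] by simp
  then show ?thesis using p hq_nonneg[of 0 y] by (simp add: Sstep_def field_simps)
qed

definition phi :: "real \<Rightarrow> real \<Rightarrow> nat \<Rightarrow> real \<Rightarrow> real" where
  "phi c b n x = Sstep (real (Suc n) * x - real (Suc n) * c - 1) * Sstep (- real (Suc n) * x + real (Suc n) * b - 1)"

lemma phi_alg: "phi c b n \<in> alg FF"
proof -
  define \<alpha>1 where "\<alpha>1 = real (Suc n)"
  define \<beta>1 where "\<beta>1 = - real (Suc n) * c - 1"
  define \<alpha>2 where "\<alpha>2 = - real (Suc n)"
  define \<beta>2 where "\<beta>2 = real (Suc n) * b - 1"
  have "phi c b n = (\<lambda>x. (Qf 0 \<alpha>1 \<beta>1 x * Rf \<alpha>1 \<beta>1 x) * (Qf 0 \<alpha>2 \<beta>2 x * Rf \<alpha>2 \<beta>2 x))"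
    by (rule ext) (simp add: phi_def Sstep_def Qf_def Rf_def \<alpha>1_def \<beta>1_def \<alpha>2_def \<beta>2_def algebra_simps)
  also have "\<dots> \<in> alg FF" by (intro alg.mult Qf_alg Rf_alg)
  finally show ?thesis .
qed

lemma phi_test:
  assumes "a \<le> c"
  shows "\<exists>D. test_fun a b (phi c b n) D"
proof -
  obtain D where D: "smooth_fun (phi c b n) D" using FF_smooth[OF phi_alg] by blast
  have np: "real (Suc n) > 0" by simp
  have "\<forall>x. x \<notin> {c + 1 / real (Suc n) .. b - 1 / real (Suc n)} \<longrightarrow> phi c b n x = 0"
  proof (intro allI impI)
    fix x assume "x \<notin> {c + 1 / real (Suc n) .. b - 1 / real (Suc n)}"
    then have "x < c + 1 / real (Suc n) \<or> x > b - 1 / real (Suc n)" by auto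
    then show "phi c b n x = 0"
    proof
      assume "x < c + 1 / real (Suc n)"
      then have "real (Suc n) * x - real (Suc n) * c - 1 \<le> 0" using np by (simp add: field_simps)
      then show ?thesis by (simp add: phi_def Sstep_le0)
    next
      assume "x > b - 1 / real (Suc n)"
      then have "- real (Suc n) * x + real (Suc n) * b - 1 \<le> 0" using np by (simp add: field_simps)
      then show ?thesis by (simp add: phi_def Sstep_le0)
    qed
  qed
  moreover have "1 / real (Suc n) > 0" using np by simp
  then have "a < c + 1 / real (Suc n)" "b - 1 / real (Suc n) < b" using assms by linarith+
  ultimately show ?thesis unfolding test_fun_def using D by blast
qed

lemma phi_bounds: "0 \<le> phi c b n x \<and> phi c b n x \<le> 1"
  using Sstep_bounds[of "real (Suc n) * x - real (Suc n) * c - 1"] Sstep_bounds[of "- real (Suc n) * x + real (Suc n) * b - 1"]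
  unfolding phi_def by (simp add: mult_le_one)

lemma phi_lim: "(\<lambda>n. phi c b n x) \<longlonglongrightarrow> indicator {c<..<b} x"
proof (cases "c < x \<and> x < b")
  case True
  obtain N :: nat where N: "real N > 2 / (x - c) + 2 / (b - x)" using reals_Archimedean2 by blast
  have "eventually (\<lambda>n. phi c b n x = 1) sequentially"
    unfolding eventually_sequentially
  proof (intro exI allI impI)
    fix n assume "N \<le> n"
    then have nN: "real (Suc n) > 2 / (x - c) + 2 / (b - x)" using N by linarith
    have p1: "2 / (x - c) > 0" "2 / (b - x) > 0" using True by auto
    have "2 / (x - c) < real (Suc n)" "2 / (b - x) < real (Suc n)" using nN p1 by linarith+
    then have i1: "2 < real (Suc n) * (x - c)" and i2: "2 < real (Suc n) * (b - x)"
      using True by (simp_all add: divide_less_eq mult.commute)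
    have e1: "- real (Suc n) * x + real (Suc n) * b = real (Suc n) * (b - x)"
      by (simp add: algebra_simps)
    have e2: "real (Suc n) * x - real (Suc n) * c = real (Suc n) * (x - c)"
      by (simp add: algebra_simps)
    have g1: "1 \<le> real (Suc n) * x - real (Suc n) * c - 1" using i1 unfolding e2 by linarith
    have g2: "1 \<le> - real (Suc n) * x + real (Suc n) * b - 1" using i2 unfolding e1 by linarith
    from g1 g2 show "phi c b n x = 1" by (simp add: phi_def Sstep_ge1)
  qed
  then have "(\<lambda>n. phi c b n x) \<longlonglongrightarrow> 1" by (rule tendsto_eventually)
  then show ?thesis using True by simp
next
  case False
  have "phi c b n x = 0" for n
  proof (cases "x \<le> c")
    case True
    then have "real (Suc n) * x \<le> real (Suc n) * c" by (intro mult_left_mono) auto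
    then have "real (Suc n) * x - real (Suc n) * c - 1 \<le> 0" by linarith
    then show ?thesis by (simp add: phi_def Sstep_le0)
  next
    case False
    then have "b \<le> x" using \<open>\<not> (c < x \<and> x < b)\<close> by auto
    then have "real (Suc n) * b \<le> real (Suc n) * x" by (intro mult_left_mono) auto
    then have "- real (Suc n) * x + real (Suc n) * b - 1 \<le> 0" by linarith
    then show ?thesis by (simp add: phi_def Sstep_le0)
  qed
  then show ?thesis using False by simp
qed



lemma fund_lemma:
  fixes g :: "real \<Rightarrow> real"
  assumes int: "set_integrable lebesgue {a<..<b} g"
    and zero: "\<And>c. a \<le> c \<Longrightarrow> c < b \<Longrightarrow> (\<integral>x\<in>{c<..<b}. g x \<partial>lebesgue) = 0"
  shows "AE x in lebesgue. x \<in> {a<..<b} \<longrightarrow> g x = 0"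
proof -
  define F where "F x = indicator {a<..<b} x * g x" for x
  have intF: "integrable lebesgue F"
    using int unfolding set_integrable_def F_def by simp
  have Fm[measurable]: "F \<in> borel_measurable lebesgue" using intF by auto
  have "F \<in> borel_measurable (completion lborel)" using intF by auto
  from completion_ex_borel_measurable_real[OF this]
  obtain F' where F'm: "F' \<in> borel_measurable lborel" and FF': "AE x in lborel. F x = F' x" by blast
  have FF'l: "AE x in lebesgue. F x = F' x" using FF' by (rule AE_completion)
  have intF'l: "integrable lebesgue F'"
    using intF FF'l F'm by (subst integrable_cong_AE[where g=F]) (auto simp: measurable_completion)
  have intF': "integrable lborel F'"
    using intF'l F'm integrable_completion by blast
  define P where "P z = max 0 (F' z)" for z
  define N where "N z = max 0 (- F' z)" for z
  have Pm[measurable]: "P \<in> borel_measurable lborel" and Nm[measurable]: "N \<in> borel_measurable lborel"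
    using F'm unfolding P_def N_def by auto
  have intP: "integrable lborel P" unfolding P_def by (intro integrable_max intF') simp
  have intN: "integrable lborel N" unfolding N_def by (intro integrable_max integrable_minus intF') simp
  have intPi: "integrable lborel (\<lambda>z. indicator {y<..} z *\<^sub>R P z)" for y
    by (rule integrable_mult_indicator) (auto intro: intP)
  have intNi: "integrable lborel (\<lambda>z. indicator {y<..} z *\<^sub>R N z)" for y
    by (rule integrable_mult_indicator) (auto intro: intN)
  have I0: "(\<integral>z. indicator {y<..} z *\<^sub>R F' z \<partial>lborel) = 0" for y
  proof -
    have "(\<integral>z. indicator {y<..} z *\<^sub>R F' z \<partial>lborel) = (\<integral>z. indicator {y<..} z *\<^sub>R F' z \<partial>lebesgue)"
      by (rule integral_completion[symmetric]) (use F'm in auto)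
    also have "\<dots> = (\<integral>z. indicator {y<..} z *\<^sub>R F z \<partial>lebesgue)"
    proof (rule integral_cong_AE)
      show "(\<lambda>z. indicator {y<..} z *\<^sub>R F z) \<in> borel_measurable lebesgue"
        by (intro borel_measurable_scaleR borel_measurable_indicator Fm) auto
    qed (use FF'l F'm intF in \<open>auto simp: measurable_completion\<close>)
    also have "\<dots> = 0"
    proof (cases "y < b")
      case True
      have "(\<lambda>z. indicator {y<..} z *\<^sub>R F z) = (\<lambda>z. indicator {max a y<..<b} z *\<^sub>R g z)"
        by (auto simp: F_def indicator_def fun_eq_iff)
      then have "(\<integral>z. indicator {y<..} z *\<^sub>R F z \<partial>lebesgue) = (\<integral>z\<in>{max a y<..<b}. g z \<partial>lebesgue)"
        by (simp add: set_lebesgue_integral_def)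
      also have "\<dots> = 0"
      proof (cases "max a y < b")
        case True then show ?thesis using zero[of "max a y"] by simp
      next
        case False then have "{max a y<..<b} = {}" by auto
        then show ?thesis by (simp add: set_lebesgue_integral_def)
      qed
      finally show ?thesis .
    next
      case False
      have "(\<lambda>z. indicator {y<..} z *\<^sub>R F z) = (\<lambda>z. 0)"
        using False by (auto simp: F_def indicator_def fun_eq_iff)
      then show ?thesis by simp
    qed
    finally show ?thesis .
  qed
  have emP: "emeasure (density lborel (\<lambda>z. ennreal (P z))) {y<..} = ennreal (\<integral>z. indicator {y<..} z *\<^sub>R P z \<partial>lborel)" for y
  proof -
    have "emeasure (density lborel (\<lambda>z. ennreal (P z))) {y<..} = (\<integral>\<^sup>+ z. ennreal (P z) * indicator {y<..} z \<partial>lborel)"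
      by (rule emeasure_density) auto
    also have "\<dots> = (\<integral>\<^sup>+ z. ennreal (indicator {y<..} z *\<^sub>R P z) \<partial>lborel)"
      by (intro nn_integral_cong) (auto simp: indicator_def)
    also have "\<dots> = ennreal (\<integral>z. indicator {y<..} z *\<^sub>R P z \<partial>lborel)"
      by (rule nn_integral_eq_integral[OF intPi]) (auto simp: P_def)
    finally show ?thesis .
  qed
  have emN: "emeasure (density lborel (\<lambda>z. ennreal (N z))) {y<..} = ennreal (\<integral>z. indicator {y<..} z *\<^sub>R N z \<partial>lborel)" for y
  proof -
    have "emeasure (density lborel (\<lambda>z. ennreal (N z))) {y<..} = (\<integral>\<^sup>+ z. ennreal (N z) * indicator {y<..} z \<partial>lborel)"
      by (rule emeasure_density) auto
    also have "\<dots> = (\<integral>\<^sup>+ z. ennreal (indicator {y<..} z *\<^sub>R N z) \<partial>lborel)"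
      by (intro nn_integral_cong) (auto simp: indicator_def)
    also have "\<dots> = ennreal (\<integral>z. indicator {y<..} z *\<^sub>R N z \<partial>lborel)"
      by (rule nn_integral_eq_integral[OF intNi]) (auto simp: N_def)
    finally show ?thesis .
  qed
  have PN: "(\<integral>z. indicator {y<..} z *\<^sub>R P z \<partial>lborel) = (\<integral>z. indicator {y<..} z *\<^sub>R N z \<partial>lborel)" for y
  proof -
    have "(\<integral>z. indicator {y<..} z *\<^sub>R P z \<partial>lborel) - (\<integral>z. indicator {y<..} z *\<^sub>R N z \<partial>lborel)
        = (\<integral>z. indicator {y<..} z *\<^sub>R P z - indicator {y<..} z *\<^sub>R N z \<partial>lborel)"
      by (rule Bochner_Integration.integral_diff[symmetric, OF intPi intNi])
    also have "\<dots> = (\<integral>z. indicator {y<..} z *\<^sub>R F' z \<partial>lborel)"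
      by (rule Bochner_Integration.integral_cong) (auto simp: P_def N_def indicator_def max_def)
    finally show ?thesis using I0[of y] by simp
  qed
  have dens: "density lborel (\<lambda>z. ennreal (P z)) = density lborel (\<lambda>z. ennreal (N z))"
  proof (rule measure_eqI_lessThan)
    show "sets (density lborel (\<lambda>z. ennreal (P z))) = sets borel" by simp
    show "sets (density lborel (\<lambda>z. ennreal (N z))) = sets borel" by simp
    show "emeasure (density lborel (\<lambda>z. ennreal (P z))) {y<..} < \<infinity>" for y
      unfolding emP by simp
    show "emeasure (density lborel (\<lambda>z. ennreal (P z))) {y<..} = emeasure (density lborel (\<lambda>z. ennreal (N z))) {y<..}" for y
      unfolding emP emN PN ..
  qed
  have "AE z in lborel. ennreal (P z) = ennreal (N z)"
  proof (rule finite_density_unique[THEN iffD1, OF _ _ _ _ _ dens])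
    show "integral\<^sup>N lborel (\<lambda>z. ennreal (P z)) \<noteq> \<infinity>"
      using nn_integral_eq_integral[OF intP] by (simp add: P_def)
  qed auto
  then have "AE z in lborel. F z = 0"
    using FF'
  proof eventually_elim
    case (elim z)
    then have "P z = N z" unfolding P_def N_def by (simp add: ennreal_inj)
    then show ?case using elim by (auto simp: P_def N_def max_def split: if_splits)
  qed
  then have "AE z in lebesgue. F z = 0" by (rule AE_completion)
  then show ?thesis by eventually_elim (auto simp: F_def)
qed



lemma deg_pos:
  fixes w :: "'v::finite \<Rightarrow> 'v \<Rightarrow> real"
  assumes g: "weighted_graph w" and two: "CARD('v) \<ge> 2"
  shows "deg w i > 0"
proof -
  have "\<exists>j::'v. j \<noteq> i"
  proof (rule ccontr)
    assume "\<not> ?thesis"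
    then have "UNIV = {i}" by auto
    then have "CARD('v) = 1" by (metis card.empty card_insert_disjoint empty_iff finite.emptyI One_nat_def)
    with two show False by simp
  qed
  then obtain j where ji: "j \<noteq> i" by blast
  have "(i, j) \<in> {(a, b). 0 < w a b}\<^sup>*" using g unfolding weighted_graph_def by blast
  then obtain k where k: "0 < w i k"
    using ji by (cases rule: converse_rtranclE) auto
  have nn: "\<forall>j. 0 \<le> w i j" using g unfolding weighted_graph_def by blast
  have "w i k \<le> (\<Sum>j\<in>UNIV. w i j)"
    by (rule member_le_sum) (use nn in auto)
  then show ?thesis using k unfolding deg_def by linarith
qed

lemma sum_lap_zero:
  fixes w :: "'v::finite \<Rightarrow> 'v \<Rightarrow> real"
  assumes sym: "\<And>i j. w i j = w j i"
  shows "(\<Sum>i\<in>UNIV. \<Sum>j\<in>UNIV. w i j * (x i - x j)) = 0"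
proof -
  let ?S = "(\<Sum>i\<in>UNIV. \<Sum>j\<in>UNIV. w i j * (x i - x j))"
  have "?S = (\<Sum>j\<in>UNIV. \<Sum>i\<in>UNIV. w i j * (x i - x j))"
    by (rule sum.swap)
  also have "\<dots> = - ?S"
    by (simp add: sum_negf[symmetric] sym algebra_simps)
  finally show ?thesis by simp
qed

lemma ipE_grad:
  fixes w :: "'v::finite \<Rightarrow> 'v \<Rightarrow> real"
  assumes g: "weighted_graph w"
  shows "ipE w (grad w x) (\<lambda>i j. grad w \<eta> i j - grad w x i j)
       = (\<Sum>i\<in>UNIV. (\<eta> i - x i) * (\<Sum>j\<in>UNIV. w i j * (x i - x j)))"
proof -
  have sym: "\<And>i j. w i j = w j i" and nn: "\<And>i j. 0 \<le> w i j"
    using g unfolding weighted_graph_def by blast+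
  define y where "y i = \<eta> i - x i" for i
  have e: "grad w x i j * (grad w \<eta> i j - grad w x i j) * w i j = w i j * (x j - x i) * (y j - y i)" for i j
    using nn[of i j] by (auto simp: grad_def y_def algebra_simps)
  have "ipE w (grad w x) (\<lambda>i j. grad w \<eta> i j - grad w x i j)
      = 1/2 * (\<Sum>i\<in>UNIV. \<Sum>j\<in>UNIV. w i j * (x j - x i) * (y j - y i))"
    unfolding ipE_def e ..
  also have "(\<Sum>i\<in>UNIV. \<Sum>j\<in>UNIV. w i j * (x j - x i) * (y j - y i))
     = (\<Sum>i\<in>UNIV. \<Sum>j\<in>UNIV. w i j * (x j - x i) * y j) + (\<Sum>i\<in>UNIV. \<Sum>j\<in>UNIV. w i j * (x i - x j) * y i)"
    by (simp add: sum.distrib[symmetric] algebra_simps)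
  also have "(\<Sum>i\<in>UNIV. \<Sum>j\<in>UNIV. w i j * (x j - x i) * y j) = (\<Sum>j\<in>UNIV. \<Sum>i\<in>UNIV. w i j * (x j - x i) * y j)"
    by (rule sum.swap)
  also have "\<dots> = (\<Sum>i\<in>UNIV. \<Sum>j\<in>UNIV. w i j * (x i - x j) * y i)"
    by (simp add: sym)
  finally show ?thesis
    by (simp add: y_def sum_distrib_left algebra_simps)
qed

lemma pointwise:
  fixes w :: "'v::finite \<Rightarrow> 'v \<Rightarrow> real"
  assumes g: "weighted_graph w" and two: "CARD('v) \<ge> 2" and eps: "0 < \<epsilon>" and xV: "x \<in> Vbox"
  shows "(\<exists>\<beta>. (\<forall>i. \<epsilon> * v i + \<epsilon> * lap w r x i - x i + avg w r x = \<beta> i - avg w r \<beta>) \<and> \<beta> \<in> Bset x) \<longleftrightarrow>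
   ((\<forall>\<eta>\<in>Vbox. mass w r \<eta> = mass w r x \<longrightarrow>
       ipV w r (\<lambda>i. \<epsilon> * v i - x i) (\<lambda>i. \<eta> i - x i)
       + \<epsilon> * ipE w (grad w x) (\<lambda>i j. grad w \<eta> i j - grad w x i j) \<ge> 0) \<and>
    ipV w r v (\<lambda>_. 1) = 0)"
proof -
  have sym: "\<And>i j. w i j = w j i" using g unfolding weighted_graph_def by blast
  define m where "m i = deg w i powr r" for i
  have mpos: "m i > 0" for i using deg_pos[OF g two, of i] unfolding m_def by simp
  define L where "L i = (\<Sum>j\<in>UNIV. w i j * (x i - x j))" for i
  have lapm: "lap w r x i * m i = L i" for i
    using deg_pos[OF g two, of i] unfolding lap_def m_def L_def
    by (simp add: powr_minus field_simps)
  have sumL: "(\<Sum>i\<in>UNIV. L i) = 0" unfolding L_def by (rule sum_lap_zero[OF sym])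
  define M1 where "M1 = (\<Sum>i\<in>UNIV. m i)"
  have M1pos: "M1 > 0" unfolding M1_def by (rule sum_pos) (auto simp: mpos)
  have mass_eq: "mass w r y = (\<Sum>i\<in>UNIV. y i * m i)" for y
    unfolding mass_def ipV_def m_def by simp
  have avg_eq: "avg w r y = (\<Sum>i\<in>UNIV. y i * m i) / M1" for y
    unfolding avg_def mass_eq M1_def by simp
  define a where "a i = \<epsilon> * v i + \<epsilon> * lap w r x i - x i + avg w r x" for i
  have key1: "ipV w r (\<lambda>i. \<epsilon> * v i - x i) (\<lambda>i. \<eta> i - x i)
       + \<epsilon> * ipE w (grad w x) (\<lambda>i j. grad w \<eta> i j - grad w x i j) = (\<Sum>i\<in>UNIV. a i * (\<eta> i - x i) * m i)"
    if "mass w r \<eta> = mass w r x" for \<eta>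
  proof -
    have y0: "(\<Sum>i\<in>UNIV. (\<eta> i - x i) * m i) = 0"
      using that unfolding mass_eq by (simp add: left_diff_distrib sum_subtractf)
    have "(\<Sum>i\<in>UNIV. a i * (\<eta> i - x i) * m i)
       = (\<Sum>i\<in>UNIV. (\<epsilon> * v i - x i) * (\<eta> i - x i) * m i) + \<epsilon> * (\<Sum>i\<in>UNIV. (\<eta> i - x i) * L i)
         + avg w r x * (\<Sum>i\<in>UNIV. (\<eta> i - x i) * m i)"
      unfolding a_def lapm[symmetric]
      by (simp add: sum.distrib[symmetric] sum_distrib_left algebra_simps)
    also have "\<dots> = ipV w r (\<lambda>i. \<epsilon> * v i - x i) (\<lambda>i. \<eta> i - x i)
       + \<epsilon> * ipE w (grad w x) (\<lambda>i j. grad w \<eta> i j - grad w x i j)"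
      using y0 unfolding ipE_grad[OF g] ipV_def m_def L_def by simp
    finally show ?thesis by simp
  qed
  have key2: "(\<Sum>i\<in>UNIV. a i * m i) = \<epsilon> * (\<Sum>i\<in>UNIV. v i * m i)"
  proof -
    have "(\<Sum>i\<in>UNIV. a i * m i) = \<epsilon> * (\<Sum>i\<in>UNIV. v i * m i) + \<epsilon> * (\<Sum>i\<in>UNIV. L i)
        - (\<Sum>i\<in>UNIV. x i * m i) + avg w r x * M1"
      unfolding a_def lapm[symmetric] M1_def
      by (simp add: sum.distrib sum_subtractf sum_distrib_left sum_distrib_right algebra_simps)
    also have "avg w r x * M1 = (\<Sum>i\<in>UNIV. x i * m i)" unfolding avg_eq using M1pos by simp
    finally show ?thesis using sumL by simp
  qed
  have ipv1: "ipV w r v (\<lambda>_. 1) = (\<Sum>i\<in>UNIV. v i * m i)" unfolding ipV_def m_def by simp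
  show ?thesis
  proof
    assume "\<exists>\<beta>. (\<forall>i. \<epsilon> * v i + \<epsilon> * lap w r x i - x i + avg w r x = \<beta> i - avg w r \<beta>) \<and> \<beta> \<in> Bset x"
    then obtain \<beta> where ab: "\<And>i. a i = \<beta> i - avg w r \<beta>" and B: "\<beta> \<in> Bset x"
      unfolding a_def by blast
    have Bx: "\<And>i. (x i = 0 \<longrightarrow> 0 \<le> \<beta> i) \<and> (0 < x i \<and> x i < 1 \<longrightarrow> \<beta> i = 0) \<and> (x i = 1 \<longrightarrow> \<beta> i \<le> 0)"
      using B xV unfolding Bset_def by auto
    have x01: "\<And>i. 0 \<le> x i \<and> x i \<le> 1" using xV unfolding Vbox_def by auto
    have part1: "ipV w r (\<lambda>i. \<epsilon> * v i - x i) (\<lambda>i. \<eta> i - x i)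
       + \<epsilon> * ipE w (grad w x) (\<lambda>i j. grad w \<eta> i j - grad w x i j) \<ge> 0"
      if \<eta>V: "\<eta> \<in> Vbox" and ms: "mass w r \<eta> = mass w r x" for \<eta>
    proof -
      have y0: "(\<Sum>i\<in>UNIV. (\<eta> i - x i) * m i) = 0"
        using ms unfolding mass_eq by (simp add: left_diff_distrib sum_subtractf)
      have "(\<Sum>i\<in>UNIV. a i * (\<eta> i - x i) * m i) = (\<Sum>i\<in>UNIV. \<beta> i * (\<eta> i - x i) * m i)
          - avg w r \<beta> * (\<Sum>i\<in>UNIV. (\<eta> i - x i) * m i)"
        unfolding ab by (simp add: sum_subtractf sum.distrib sum_distrib_left algebra_simps)
      also have "\<dots> = (\<Sum>i\<in>UNIV. \<beta> i * (\<eta> i - x i) * m i)" using y0 by simp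
      also have "\<dots> \<ge> 0"
      proof (rule sum_nonneg)
        fix i
        have e01: "0 \<le> \<eta> i \<and> \<eta> i \<le> 1" using \<eta>V unfolding Vbox_def by auto
        have "\<beta> i * (\<eta> i - x i) \<ge> 0"
        proof (cases "x i = 0")
          case True then show ?thesis using Bx[of i] e01 by simp
        next
          case False
          show ?thesis
          proof (cases "x i = 1")
            case True then show ?thesis using Bx[of i] e01
              by (simp add: mult_nonpos_nonpos)
          next
            case False
            then have "\<beta> i = 0" using Bx[of i] x01[of i] \<open>x i \<noteq> 0\<close> by auto
            then show ?thesis by simp
          qed
        qed
        then show "\<beta> i * (\<eta> i - x i) * m i \<ge> 0" using mpos[of i] by simp
      qed
      finally show ?thesis using key1[OF ms] by simp
    qed
    have "(\<Sum>i\<in>UNIV. a i * m i) = (\<Sum>i\<in>UNIV. \<beta> i * m i) - avg w r \<beta> * M1"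
      unfolding ab M1_def by (simp add: sum_subtractf sum_distrib_left sum_distrib_right algebra_simps)
    also have "\<dots> = 0" unfolding avg_eq using M1pos by simp
    finally have "\<epsilon> * (\<Sum>i\<in>UNIV. v i * m i) = 0" using key2 by simp
    then have "ipV w r v (\<lambda>_. 1) = 0" using eps ipv1 by simp
    then show "(\<forall>\<eta>\<in>Vbox. mass w r \<eta> = mass w r x \<longrightarrow>
       ipV w r (\<lambda>i. \<epsilon> * v i - x i) (\<lambda>i. \<eta> i - x i)
       + \<epsilon> * ipE w (grad w x) (\<lambda>i j. grad w \<eta> i j - grad w x i j) \<ge> 0) \<and>
      ipV w r v (\<lambda>_. 1) = 0" using part1 by blast
  next
    assume R: "(\<forall>\<eta>\<in>Vbox. mass w r \<eta> = mass w r x \<longrightarrow>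
       ipV w r (\<lambda>i. \<epsilon> * v i - x i) (\<lambda>i. \<eta> i - x i)
       + \<epsilon> * ipE w (grad w x) (\<lambda>i j. grad w \<eta> i j - grad w x i j) \<ge> 0) \<and>
      ipV w r v (\<lambda>_. 1) = 0"
    have x01: "\<And>i. 0 \<le> x i \<and> x i \<le> 1" using xV unfolding Vbox_def by auto
    have suma: "(\<Sum>i\<in>UNIV. a i * m i) = 0" using key2 R ipv1 by simp
    have mono: "a j \<le> a i" if xi: "x i < 1" and xj: "0 < x j" for i j
    proof (cases "i = j")
      case True then show ?thesis by simp
    next
      case ij: False
      define s where "s = min ((1 - x i) * m i) (x j * m j)"
      have spos: "s > 0" unfolding s_def using xi xj mpos[of i] mpos[of j] by simp
      define \<eta> where "\<eta> k = x k + (if k = i then s / m i else 0) - (if k = j then s / m j else 0)" for k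
      have s1: "s / m i \<le> 1 - x i" using mpos[of i] unfolding s_def by (simp add: field_simps)
      have s2: "s / m j \<le> x j" using mpos[of j] unfolding s_def by (simp add: field_simps)
      have s1p: "s / m i > 0" and s2p: "s / m j > 0" using spos mpos[of i] mpos[of j] by auto
      have \<eta>V: "\<eta> \<in> Vbox" unfolding Vbox_def \<eta>_def
        using x01 s1 s2 s1p s2p ij by (auto, smt (verit) x01)
      have d: "(\<lambda>k. (\<eta> k - x k) * m k) = (\<lambda>k. (if k = i then s else 0) - (if k = j then s else 0))"
        using mpos[of i] mpos[of j] by (auto simp: \<eta>_def fun_eq_iff ij)
      have d2: "(\<lambda>k. a k * (\<eta> k - x k) * m k) = (\<lambda>k. (if k = i then a i * s else 0) - (if k = j then a j * s else 0))"
        using mpos[of i] mpos[of j] by (auto simp: \<eta>_def fun_eq_iff ij)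
      have ms: "mass w r \<eta> = mass w r x"
      proof -
        have "(\<Sum>k\<in>UNIV. (\<eta> k - x k) * m k) = 0"
          unfolding d by (simp add: sum_subtractf)
        then show ?thesis unfolding mass_eq by (simp add: left_diff_distrib sum_subtractf)
      qed
      have "0 \<le> ipV w r (\<lambda>i. \<epsilon> * v i - x i) (\<lambda>i. \<eta> i - x i)
       + \<epsilon> * ipE w (grad w x) (\<lambda>i j. grad w \<eta> i j - grad w x i j)" using R \<eta>V ms by blast
      then have "0 \<le> (\<Sum>k\<in>UNIV. a k * (\<eta> k - x k) * m k)" using key1[OF ms] by linarith
      also have "\<dots> = a i * s - a j * s" unfolding d2 by (simp add: sum_subtractf)
      finally show ?thesis using spos by (simp add: algebra_simps)
    qed
    define P where "P = {j. 0 < x j}"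
    define c where "c = (if P = {} then - Min (range a) else - Max (a ` P))"
    define \<beta> where "\<beta> i = a i + c" for i
    have B: "\<beta> \<in> Bset x"
    proof -
      have "(x i = 0 \<longrightarrow> 0 \<le> \<beta> i) \<and> (0 < x i \<and> x i < 1 \<longrightarrow> \<beta> i = 0) \<and> (x i = 1 \<longrightarrow> \<beta> i \<le> 0)" for i
      proof (cases "P = {}")
        case True
        have cm: "c = - Min (range a)" unfolding c_def using True by simp
        have "Min (range a) \<le> a i" by (rule Min_le) auto
        moreover have "\<not> 0 < x i" using True unfolding P_def by auto
        ultimately show ?thesis unfolding \<beta>_def cm using x01[of i] by (auto simp del: minus_Min_eq_Max)
      next
        case False
        have fin: "finite (a ` P)" by simp
        obtain j where jP: "j \<in> P" and jmax: "Max (a ` P) = a j"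
          using False fin by (metis (mono_tags, lifting) Max_in empty_is_image imageE)
        have le: "a k \<le> a j" if "k \<in> P" for k using jmax that fin Max_ge by (metis image_eqI)
        have ge: "a j \<le> a k" if "x k < 1" for k using mono[OF that] jP unfolding P_def by simp
        show ?thesis unfolding \<beta>_def c_def using False jmax le ge x01[of i]
          by (auto simp: P_def intro: antisym)
      qed
      then show ?thesis using xV unfolding Bset_def by auto
    qed
    have avgb: "avg w r \<beta> = c"
    proof -
      have "(\<Sum>i\<in>UNIV. \<beta> i * m i) = (\<Sum>i\<in>UNIV. a i * m i) + c * M1"
        unfolding \<beta>_def M1_def by (simp add: sum.distrib sum_distrib_left sum_distrib_right algebra_simps)
      then show ?thesis unfolding avg_eq using suma M1pos by simp
    qed
    show "\<exists>\<beta>. (\<forall>i. \<epsilon> * v i + \<epsilon> * lap w r x i - x i + avg w r x = \<beta> i - avg w r \<beta>) \<and> \<beta> \<in> Bset x"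
    proof -
      have "\<forall>i. a i = \<beta> i - avg w r \<beta>" using avgb unfolding \<beta>_def by simp
      then show ?thesis using B unfolding a_def by blast
    qed
  qed
qed



lemma L2_set_integrable:
  fixes g :: "real \<Rightarrow> real"
  assumes "L2_on {a<..<b} g"
  shows "set_integrable lebesgue {a<..<b} g"
proof -
  have m: "(\<lambda>x. indicator {a<..<b} x *\<^sub>R g x) \<in> borel_measurable lebesgue"
    and i2: "integrable lebesgue (\<lambda>x. indicator {a<..<b} x *\<^sub>R (g x)\<^sup>2)"
    using assms unfolding L2_on_def set_integrable_def set_borel_measurable_def by auto
  have i1: "integrable lebesgue (indicator {a<..<b} :: real \<Rightarrow> real)"
  proof (rule integrable_real_indicator)
    show "emeasure lebesgue {a<..<b} < \<infinity>"
      apply (cases "a \<le> b")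
        apply (subst emeasure_completion)
        apply simp
       apply simp
      apply simp
      done
  qed simp
  have "integrable lebesgue (\<lambda>x. indicator {a<..<b} x + indicator {a<..<b} x *\<^sub>R (g x)\<^sup>2 :: real)"
    by (intro Bochner_Integration.integrable_add i1 i2)
  then show ?thesis unfolding set_integrable_def
  proof (rule Bochner_Integration.integrable_bound)
    show "AE x in lebesgue. norm (indicator {a<..<b} x *\<^sub>R g x) \<le> norm (indicator {a<..<b} x + indicator {a<..<b} x *\<^sub>R (g x)\<^sup>2 :: real)"
    proof (rule AE_I2)
      fix x
      have "\<bar>g x\<bar> \<le> 1 + (g x)\<^sup>2"
      proof (cases "\<bar>g x\<bar> \<le> 1")
        case True then show ?thesis using zero_le_power2[of "g x"] by linarith
      next
        case False
        then have "\<bar>g x\<bar> * 1 \<le> \<bar>g x\<bar> * \<bar>g x\<bar>" by (intro mult_left_mono) auto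
        then show ?thesis by (simp add: power2_eq_square abs_mult_self_eq)
      qed
      then show "norm (indicator {a<..<b} x *\<^sub>R g x) \<le> norm (indicator {a<..<b} x + indicator {a<..<b} x *\<^sub>R (g x)\<^sup>2 :: real)"
        by (auto simp: indicator_def)
    qed
  qed (rule m)
qed

lemma test_fun_cont:
  assumes "test_fun a b \<phi> D"
  shows "continuous_on UNIV \<phi>"
proof -
  have "D 0 = \<phi>" "\<forall>x. (D 0 has_real_derivative D (Suc 0) x) (at x)"
    using assms unfolding test_fun_def smooth_fun_def by auto
  then have "\<forall>x. isCont \<phi> x" using DERIV_isCont by metis
  then show ?thesis by (simp add: continuous_on_eq_continuous_at)
qed

lemma test_integrable:
  fixes g :: "real \<Rightarrow> real"
  assumes gi: "set_integrable lebesgue {a<..<b} g" and tf: "test_fun a b \<phi> D"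
  shows "set_integrable lebesgue {a<..<b} (\<lambda>t. g t * \<phi> t)"
proof -
  have cont: "continuous_on UNIV \<phi>" by (rule test_fun_cont[OF tf])
  have "compact (\<phi> ` {a..b})"
    by (rule compact_continuous_image) (use cont continuous_on_subset in auto)
  then obtain B where B: "\<And>y. y \<in> \<phi> ` {a..b} \<Longrightarrow> norm y \<le> B"
    using compact_imp_bounded bounded_iff by metis
  have B0: "\<bar>\<phi> x\<bar> \<le> B" if "x \<in> {a<..<b}" for x using B[of "\<phi> x"] that by auto
  have \<phi>m: "\<phi> \<in> borel_measurable lebesgue"
    using borel_measurable_continuous_onI[OF cont] by (simp add: measurable_completion)
  have gm: "(\<lambda>x. indicator {a<..<b} x *\<^sub>R g x) \<in> borel_measurable lebesgue"
    using gi unfolding set_integrable_def by auto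
  have m: "(\<lambda>x. indicator {a<..<b} x *\<^sub>R (g x * \<phi> x)) \<in> borel_measurable lebesgue"
  proof -
    have "(\<lambda>x. (indicator {a<..<b} x *\<^sub>R g x) * \<phi> x) \<in> borel_measurable lebesgue"
      using gm \<phi>m by (rule borel_measurable_times)
    then show ?thesis by (simp add: mult.assoc)
  qed
  have i: "integrable lebesgue (\<lambda>x. B * (indicator {a<..<b} x *\<^sub>R g x))"
    using gi unfolding set_integrable_def by (rule integrable_mult_right)
  show ?thesis unfolding set_integrable_def
  proof (rule Bochner_Integration.integrable_bound[OF i m], rule AE_I2)
    fix x
    show "norm (indicator {a<..<b} x *\<^sub>R (g x * \<phi> x)) \<le> norm (B * (indicator {a<..<b} x *\<^sub>R g x))"
    proof (cases "x \<in> {a<..<b}")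
      case True
      have "\<bar>g x\<bar> * \<bar>\<phi> x\<bar> \<le> \<bar>g x\<bar> * B" using B0[OF True] by (intro mult_left_mono) auto
      moreover have "\<bar>g x\<bar> * B \<le> \<bar>B\<bar> * \<bar>g x\<bar>" by (simp add: mult.commute mult_right_mono)
      ultimately show ?thesis using True by (simp add: abs_mult)
    next
      case False then show ?thesis by simp
    qed
  qed
qed

lemma weak_unique:
  fixes f g1 g2 :: "real \<Rightarrow> real"
  assumes h1: "H1_weak_deriv a b f g1" and h2: "H1_weak_deriv a b f g2"
  shows "AE x in lebesgue. x \<in> {a<..<b} \<longrightarrow> g1 x = g2 x"
proof -
  have gi1: "set_integrable lebesgue {a<..<b} g1" and gi2: "set_integrable lebesgue {a<..<b} g2"
    using h1 h2 L2_set_integrable unfolding H1_weak_deriv_def by blast+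
  define G where "G x = g1 x - g2 x" for x
  have Gi: "set_integrable lebesgue {a<..<b} G"
    unfolding G_def by (rule set_integral_diff(1)[OF gi1 gi2])
  have Z: "(\<integral>x\<in>{a<..<b}. G x * \<phi> x \<partial>lebesgue) = 0" if tf: "test_fun a b \<phi> D" for \<phi> D
  proof -
    have e1: "(\<integral>t\<in>{a<..<b}. f t * D 1 t \<partial>lebesgue) = - (\<integral>t\<in>{a<..<b}. g1 t * \<phi> t \<partial>lebesgue)"
      using h1 tf unfolding H1_weak_deriv_def by blast
    have e2: "(\<integral>t\<in>{a<..<b}. f t * D 1 t \<partial>lebesgue) = - (\<integral>t\<in>{a<..<b}. g2 t * \<phi> t \<partial>lebesgue)"
      using h2 tf unfolding H1_weak_deriv_def by blast
    have "(\<integral>x\<in>{a<..<b}. G x * \<phi> x \<partial>lebesgue) = (\<integral>x\<in>{a<..<b}. g1 x * \<phi> x - g2 x * \<phi> x \<partial>lebesgue)"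
      unfolding G_def by (simp add: left_diff_distrib)
    also have "\<dots> = (\<integral>t\<in>{a<..<b}. g1 t * \<phi> t \<partial>lebesgue) - (\<integral>t\<in>{a<..<b}. g2 t * \<phi> t \<partial>lebesgue)"
      by (rule set_integral_diff(2)[OF test_integrable[OF gi1 tf] test_integrable[OF gi2 tf]])
    also have "\<dots> = 0" using e1 e2 by simp
    finally show ?thesis .
  qed
  have C: "(\<integral>x\<in>{c<..<b}. G x \<partial>lebesgue) = 0" if c: "a \<le> c" "c < b" for c
  proof -
    define s where "s n x = indicator {a<..<b} x *\<^sub>R (G x * phi c b n x)" for n x
    define F where "F x = indicator {c<..<b} x *\<^sub>R G x" for x
    define w where "w x = norm (indicator {a<..<b} x *\<^sub>R G x)" for x
    have tfn: "\<exists>D. test_fun a b (phi c b n) D" for n using phi_test[OF c(1)] by blast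
    have si: "integrable lebesgue (s n)" for n
      using tfn[of n] test_integrable[OF Gi] unfolding s_def set_integrable_def by blast
    have s0: "integral\<^sup>L lebesgue (s n) = 0" for n
      using tfn[of n] Z unfolding s_def set_lebesgue_integral_def by blast
    have Gm: "(\<lambda>x. indicator {a<..<b} x *\<^sub>R G x) \<in> borel_measurable lebesgue"
      using Gi unfolding set_integrable_def by auto
    have Fe: "F = (\<lambda>x. indicator {c<..<b} x * (indicator {a<..<b} x *\<^sub>R G x))"
      using c by (auto simp: F_def indicator_def fun_eq_iff)
    have Fm: "F \<in> borel_measurable lebesgue"
      unfolding Fe by (intro borel_measurable_times Gm borel_measurable_indicator) auto
    have wi: "integrable lebesgue w"
      unfolding w_def using Gi unfolding set_integrable_def by (rule integrable_norm)
    have lim: "AE x in lebesgue. (\<lambda>n. s n x) \<longlonglongrightarrow> F x"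
    proof (rule AE_I2)
      fix x
      have "(\<lambda>n. indicator {a<..<b} x * G x * phi c b n x) \<longlonglongrightarrow> indicator {a<..<b} x * G x * indicator {c<..<b} x"
        by (intro tendsto_mult tendsto_const phi_lim)
      moreover have "indicator {a<..<b} x * G x * indicator {c<..<b} x = F x"
        using c by (auto simp: F_def indicator_def)
      ultimately show "(\<lambda>n. s n x) \<longlonglongrightarrow> F x" by (simp add: s_def mult.assoc)
    qed
    have bound: "AE x in lebesgue. norm (s n x) \<le> w x" for n
    proof (rule AE_I2)
      fix x
      have "\<bar>G x\<bar> * \<bar>phi c b n x\<bar> \<le> \<bar>G x\<bar> * 1"
        using phi_bounds[of c b n x] by (intro mult_left_mono) auto
      then show "norm (s n x) \<le> w x" by (auto simp: s_def w_def abs_mult indicator_def)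
    qed
    have "(\<lambda>n. integral\<^sup>L lebesgue (s n)) \<longlonglongrightarrow> integral\<^sup>L lebesgue F"
      using si by (intro integral_dominated_convergence[OF Fm _ wi lim bound]) auto
    then have "integral\<^sup>L lebesgue F = 0" unfolding s0 by (simp add: LIMSEQ_const_iff)
    then show ?thesis unfolding F_def set_lebesgue_integral_def .
  qed
  have "AE x in lebesgue. x \<in> {a<..<b} \<longrightarrow> G x = 0"
    by (rule fund_lemma[OF Gi C])
  then show ?thesis by eventually_elim (simp add: G_def)
qed



lemma H1loc_unique:
  fixes u u' u'' :: "real \<Rightarrow> 'v::finite \<Rightarrow> real"
  assumes T: "is_interval T" and h1: "H1loc_deriv T u u'" and h2: "H1loc_deriv T u u''"
  shows "AE t in lebesgue. t \<in> T \<longrightarrow> u' t = u'' t"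
proof -
  define Q where "Q = {pq \<in> \<rat> \<times> \<rat>. fst pq \<in> T \<and> snd pq \<in> T \<and> fst pq < snd pq}"
  have cQ: "countable Q"
    by (rule countable_subset[of _ "\<rat> \<times> \<rat>"]) (auto simp: Q_def countable_rat)
  have loc: "AE t in lebesgue. t \<in> {fst pq<..<snd pq} \<longrightarrow> u' t = u'' t" if "pq \<in> Q" for pq
  proof -
    have "AE t in lebesgue. \<forall>i\<in>UNIV. t \<in> {fst pq<..<snd pq} \<longrightarrow> u' t i = u'' t i"
    proof (rule AE_finite_allI)
      fix i :: 'v
      have "H1_weak_deriv (fst pq) (snd pq) (\<lambda>t. u t i) (\<lambda>t. u' t i)"
        "H1_weak_deriv (fst pq) (snd pq) (\<lambda>t. u t i) (\<lambda>t. u'' t i)"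
        using h1 h2 that unfolding H1loc_deriv_def Q_def by auto
      from weak_unique[OF this]
      show "AE t in lebesgue. t \<in> {fst pq<..<snd pq} \<longrightarrow> u' t i = u'' t i" .
    qed simp
    then show ?thesis by eventually_elim (auto simp: fun_eq_iff)
  qed
  have A1: "AE t in lebesgue. \<forall>pq\<in>Q. t \<in> {fst pq<..<snd pq} \<longrightarrow> u' t = u'' t"
    unfolding AE_ball_countable[OF cQ] using loc by blast
  have "AE t in lborel. t \<notin> {Inf T, Sup T}"
    by (rule AE_not_in) (rule countable_imp_null_set_lborel, simp)
  then have A2: "AE t in lebesgue. t \<notin> {Inf T, Sup T}" by (rule AE_completion)
  from A1 A2 show ?thesis
  proof eventually_elim
    case (elim t)
    show ?case
    proof
      assume tT: "t \<in> T"
      have "\<exists>s1\<in>T. s1 < t"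
      proof (rule ccontr)
        assume "\<not> ?thesis"
        then have "Inf T = t" using tT by (intro cInf_eq_minimum) (auto simp: not_less)
        then show False using elim by auto
      qed
      then obtain s1 where s1: "s1 \<in> T" "s1 < t" by blast
      have "\<exists>s2\<in>T. t < s2"
      proof (rule ccontr)
        assume "\<not> ?thesis"
        then have "Sup T = t" using tT by (intro cSup_eq_maximum) (auto simp: not_less)
        then show False using elim by auto
      qed
      then obtain s2 where s2: "s2 \<in> T" "t < s2" by blast
      obtain p where p: "p \<in> \<rat>" "s1 < p" "p < t" using Rats_dense_in_real[OF s1(2)] by blast
      obtain q where q: "q \<in> \<rat>" "t < q" "q < s2" using Rats_dense_in_real[OF s2(2)] by blast
      have "p \<in> T" "q \<in> T" using T s1 s2 p q tT unfolding is_interval_1 by (meson less_imp_le)+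
      then have "(p, q) \<in> Q" using p q unfolding Q_def by auto
      with elim(1) have "t \<in> {fst (p, q)<..<snd (p, q)} \<longrightarrow> u' t = u'' t" by (rule bspec)
      then show "u' t = u'' t" using p q by simp
    qed
  qed
qed

theorem theorem7:
  fixes w :: "'v::finite \<Rightarrow> 'v \<Rightarrow> real" and r \<epsilon> :: real and T :: "real set"
    and u u' :: "real \<Rightarrow> 'v \<Rightarrow> real"
  assumes graph: "weighted_graph w" and two: "CARD('v) \<ge> 2"
    and r: "0 \<le> r" "r \<le> 1" and eps: "0 < \<epsilon>"
    and T: "is_interval T"
    and uV: "\<forall>t\<in>T. u t \<in> Vbox"
    and uH1: "H1loc_deriv T u u'"
    and ucont: "continuous_on T u"
  shows "(\<exists>\<beta>. mc_dobs_AC_solution w r \<epsilon> T u \<beta>) \<longleftrightarrow>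
    (AE t in lebesgue. t \<in> T \<longrightarrow>
       (\<forall>\<eta>\<in>Vbox. mass w r \<eta> = mass w r (u t) \<longrightarrow>
          ipV w r (\<lambda>i. \<epsilon> * u' t i - u t i) (\<lambda>i. \<eta> i - u t i)
          + \<epsilon> * ipE w (grad w (u t)) (\<lambda>i j. grad w \<eta> i j - grad w (u t) i j) \<ge> 0) \<and>
       ipV w r (u' t) (\<lambda>_. 1) = 0)"
proof -
  note pw = pointwise[OF graph two eps]
  show ?thesis
  proof
    assume "\<exists>\<beta>. mc_dobs_AC_solution w r \<epsilon> T u \<beta>"
    then obtain \<beta> u'' where H: "H1loc_deriv T u u''" and
      AE1: "AE t in lebesgue. t \<in> T \<longrightarrow>
           (\<forall>i. \<epsilon> * u'' t i + \<epsilon> * lap w r (u t) i - u t i + avg w r (u t)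
                 = \<beta> t i - avg w r (\<beta> t)) \<and> \<beta> t \<in> Bset (u t)"
      unfolding mc_dobs_AC_solution_def by blast
    have AEu: "AE t in lebesgue. t \<in> T \<longrightarrow> u' t = u'' t" by (rule H1loc_unique[OF T uH1 H])
    from AE1 AEu show "AE t in lebesgue. t \<in> T \<longrightarrow>
       (\<forall>\<eta>\<in>Vbox. mass w r \<eta> = mass w r (u t) \<longrightarrow>
          ipV w r (\<lambda>i. \<epsilon> * u' t i - u t i) (\<lambda>i. \<eta> i - u t i)
          + \<epsilon> * ipE w (grad w (u t)) (\<lambda>i j. grad w \<eta> i j - grad w (u t) i j) \<ge> 0) \<and>
       ipV w r (u' t) (\<lambda>_. 1) = 0"
    proof eventually_elim
      case (elim t)
      show ?case
      proof
        assume tT: "t \<in> T"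
        then have "\<exists>\<beta>. (\<forall>i. \<epsilon> * u'' t i + \<epsilon> * lap w r (u t) i - u t i + avg w r (u t)
                 = \<beta> i - avg w r \<beta>) \<and> \<beta> \<in> Bset (u t)" using elim by blast
        then have "(\<forall>\<eta>\<in>Vbox. mass w r \<eta> = mass w r (u t) \<longrightarrow>
          ipV w r (\<lambda>i. \<epsilon> * u'' t i - u t i) (\<lambda>i. \<eta> i - u t i)
          + \<epsilon> * ipE w (grad w (u t)) (\<lambda>i j. grad w \<eta> i j - grad w (u t) i j) \<ge> 0) \<and>
          ipV w r (u'' t) (\<lambda>_. 1) = 0"
          using pw[of "u t" "u'' t"] uV tT by blast
        then show "(\<forall>\<eta>\<in>Vbox. mass w r \<eta> = mass w r (u t) \<longrightarrow>
          ipV w r (\<lambda>i. \<epsilon> * u' t i - u t i) (\<lambda>i. \<eta> i - u t i)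
          + \<epsilon> * ipE w (grad w (u t)) (\<lambda>i j. grad w \<eta> i j - grad w (u t) i j) \<ge> 0) \<and>
          ipV w r (u' t) (\<lambda>_. 1) = 0"
          using elim tT by simp
      qed
    qed
  next
    assume R: "AE t in lebesgue. t \<in> T \<longrightarrow>
       (\<forall>\<eta>\<in>Vbox. mass w r \<eta> = mass w r (u t) \<longrightarrow>
          ipV w r (\<lambda>i. \<epsilon> * u' t i - u t i) (\<lambda>i. \<eta> i - u t i)
          + \<epsilon> * ipE w (grad w (u t)) (\<lambda>i j. grad w \<eta> i j - grad w (u t) i j) \<ge> 0) \<and>
       ipV w r (u' t) (\<lambda>_. 1) = 0"
    define P where "P t b \<longleftrightarrow> (\<forall>i. \<epsilon> * u' t i + \<epsilon> * lap w r (u t) i - u t i + avg w r (u t)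
                 = b i - avg w r b) \<and> b \<in> Bset (u t)" for t b
    define \<beta> where "\<beta> t = (SOME b. P t b)" for t
    have "AE t in lebesgue. t \<in> T \<longrightarrow> P t (\<beta> t)"
      using R
    proof eventually_elim
      case (elim t)
      show ?case
      proof
        assume tT: "t \<in> T"
        have "\<exists>b. P t b" unfolding P_def using pw[of "u t" "u' t"] uV tT elim by blast
        then show "P t (\<beta> t)" unfolding \<beta>_def by (rule someI_ex)
      qed
    qed
    then have "mc_dobs_AC_solution w r \<epsilon> T u \<beta>"
      unfolding mc_dobs_AC_solution_def P_def using uV ucont uH1 by blast
    then show "\<exists>\<beta>. mc_dobs_AC_solution w r \<epsilon> T u \<beta>" by blast
  qed
qed

end
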